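(* For a finite graph $G$ on $n$ vertices, $\theta(G)=D(G)$ if and only if $G$ is asymmetric (i.e. $\mathrm{Aut}(G)=\{\mathrm{id}\}$), or $G\cong K_n$, or $G\cong\overline{K_n}$.
   Context: All graphs are finite and simple. A vertex coloring of $G$ is distinguishing if no non-identity automorphism of $G$ maps every vertex to a vertex of the same color. The distinguishing number $D(G)$ is the minimum number of colors in a distinguishing coloring of $G$. The distinguishing threshold $\theta(G)$ is the minimum $k$ such that every vertex coloring of $G$ using exactly $k$ colors is distinguishing; equivalently $\theta(G)=1+\max\{c(\alpha):\alpha\in\mathrm{Aut}(G)\}$, with $c(\alpha)$ the number of cycles of $\alpha$ (fixed points counted) and $c(\mathrm{id})=0$. *)

theory Defs
  imports Main
begin

text \<open>A finite simple graph: finite vertex set V and a symmetric irreflexive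
  adjacency relation E (only its restriction to V matters).\<close>
definition simple_graph :: "'a set \<Rightarrow> ('a \<Rightarrow> 'a \<Rightarrow> bool) \<Rightarrow> bool" where
  "simple_graph V E \<longleftrightarrow> finite V \<and> (\<forall>u\<in>V. \<forall>v\<in>V. E u v \<longrightarrow> E v u) \<and> (\<forall>v\<in>V. \<not> E v v)"

definition automorphism :: "'a set \<Rightarrow> ('a \<Rightarrow> 'a \<Rightarrow> bool) \<Rightarrow> ('a \<Rightarrow> 'a) \<Rightarrow> bool" where
  "automorphism V E \<sigma> \<longleftrightarrow> bij_betw \<sigma> V V \<and> (\<forall>u\<in>V. \<forall>v\<in>V. E (\<sigma> u) (\<sigma> v) \<longleftrightarrow> E u v)"

definition asymmetric :: "'a set \<Rightarrow> ('a \<Rightarrow> 'a \<Rightarrow> bool) \<Rightarrow> bool" where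
  "asymmetric V E \<longleftrightarrow> (\<forall>\<sigma>. automorphism V E \<sigma> \<longrightarrow> (\<forall>v\<in>V. \<sigma> v = v))"

definition distinguishing :: "'a set \<Rightarrow> ('a \<Rightarrow> 'a \<Rightarrow> bool) \<Rightarrow> ('a \<Rightarrow> nat) \<Rightarrow> bool" where
  "distinguishing V E c \<longleftrightarrow>
     (\<forall>\<sigma>. automorphism V E \<sigma> \<and> (\<forall>v\<in>V. c (\<sigma> v) = c v) \<longrightarrow> (\<forall>v\<in>V. \<sigma> v = v))"

definition distinguishing_number :: "'a set \<Rightarrow> ('a \<Rightarrow> 'a \<Rightarrow> bool) \<Rightarrow> nat" where
  "distinguishing_number V E =
     (LEAST k. \<exists>c. c ` V \<subseteq> {0..<k} \<and> distinguishing V E c)"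

definition distinguishing_threshold :: "'a set \<Rightarrow> ('a \<Rightarrow> 'a \<Rightarrow> bool) \<Rightarrow> nat" where
  "distinguishing_threshold V E =
     (LEAST k. k \<ge> 1 \<and> (\<forall>c :: 'a \<Rightarrow> nat. card (c ` V) = k \<longrightarrow> distinguishing V E c))"

text \<open>G is isomorphic to the complete graph K_n resp. the empty graph on n = |V| vertices.\<close>
definition iso_complete :: "'a set \<Rightarrow> ('a \<Rightarrow> 'a \<Rightarrow> bool) \<Rightarrow> bool" where
  "iso_complete V E \<longleftrightarrow> (\<forall>u\<in>V. \<forall>v\<in>V. u \<noteq> v \<longrightarrow> E u v)"

definition iso_empty :: "'a set \<Rightarrow> ('a \<Rightarrow> 'a \<Rightarrow> bool) \<Rightarrow> bool" where
  "iso_empty V E \<longleftrightarrow> (\<forall>u\<in>V. \<forall>v\<in>V. \<not> E u v)"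

end

theory Submission
  imports Defs
begin

lemma aut_in: "automorphism V E s \<Longrightarrow> v \<in> V \<Longrightarrow> s v \<in> V"
  unfolding automorphism_def by (meson bij_betwE)
lemma aut_inj: "automorphism V E s \<Longrightarrow> inj_on s V"
  unfolding automorphism_def by (simp add: bij_betw_def)
lemma aut_E: "automorphism V E s \<Longrightarrow> u \<in> V \<Longrightarrow> v \<in> V \<Longrightarrow> E (s u) (s v) = E u v"
  unfolding automorphism_def by blast

locale thr =
  fixes V :: "'a set" and E and m :: nat and R
  assumes sg: "simple_graph V E"
    and A: "\<And>c::'a\<Rightarrow>nat. card (c`V) = m \<Longrightarrow> distinguishing V E c"
    and B: "\<And>c::'a\<Rightarrow>nat. c`V \<subseteq> {0..<m-1} \<Longrightarrow> \<not> distinguishing V E c"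
    and m2: "2 \<le> m" and RV: "R \<subseteq> V" and cardR: "card R + m = card V + 2"
begin

lemma finV: "finite V" using sg by (simp add: simple_graph_def)
lemma finR: "finite R" using RV finV finite_subset by blast
lemma symE: "u \<in> V \<Longrightarrow> v \<in> V \<Longrightarrow> E u v = E v u" using sg by (auto simp: simple_graph_def)

lemma cardS: "card (V - R) = m - 2"
  using cardR RV finR by (simp add: card_Diff_subset)

lemma getS: obtains h where "bij_betw h (V-R) {0..<m-2}"
  using ex_bij_betw_finite_nat[of "V-R"] finV cardS by auto

lemma Lp:
  assumes aut: "automorphism V E \<tau>" and fixS: "\<forall>s\<in>V-R. \<tau> s = s"
    and RR: "\<forall>v\<in>R. \<tau> v \<in> R" and AR: "A \<subseteq> R" and Ane: "A \<noteq> {}" and AnR: "A \<noteq> R"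
    and AA: "\<forall>v\<in>A. \<tau> v \<in> A"
  shows "\<forall>v\<in>V. \<tau> v = v"
proof -
  obtain h where h: "bij_betw h (V-R) {0..<m-2}" by (rule getS)
  have finA: "finite A" using AR finR finite_subset by blast
  have injA: "inj_on \<tau> A" using aut_inj[OF aut] AR RV inj_on_subset by blast
  have imA: "\<tau> ` A = A" using endo_inj_surj[OF finA _ injA] AA by blast
  have RA: "\<forall>v\<in>R-A. \<tau> v \<in> R-A"
  proof
    fix v assume v: "v \<in> R - A"
    show "\<tau> v \<in> R - A"
    proof (rule ccontr)
      assume "\<tau> v \<notin> R - A"
      with RR v have "\<tau> v \<in> A" by blast
      then obtain a where a: "a \<in> A" "\<tau> v = \<tau> a" using imA by force
      then have "v = a" using aut_inj[OF aut] v AR RV by (meson DiffD1 inj_onD subsetD)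
      then show False using v a by blast
    qed
  qed
  define c' where "c' v = (if v \<in> V-R then h v else if v\<in>A then m-2 else m-1)" for v
  have "c' ` V = {0..<m}"
  proof
    have hlt: "\<And>v. v \<in> V - R \<Longrightarrow> h v < m - 2" using h by (auto simp: bij_betw_def)
    show "c' ` V \<subseteq> {0..<m}" using hlt m2 by (force simp: c'_def)
    show "{0..<m} \<subseteq> c' ` V"
    proof
      fix k assume k: "k \<in> {0..<m}"
      show "k \<in> c' ` V"
      proof (cases "k < m - 2")
        case True
        then obtain s where "s \<in> V - R" "h s = k" using h by (metis atLeastLessThan_iff bij_betw_iff_bijections zero_le)
        then show ?thesis by (force simp: c'_def)
      next
        case False
        show ?thesis
        proof (cases "k = m-2")
          case True
          obtain a where "a \<in> A" using Ane by blast
          then show ?thesis using True AR RV by (force simp: c'_def)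
        next
          case False
          then have "k = m - 1" using \<open>\<not> k < m-2\<close> k by auto
          obtain a where "a \<in> R - A" using AnR AR by blast
          then show ?thesis using \<open>k = m-1\<close> AR RV by (force simp: c'_def)
        qed
      qed
    qed
  qed
  then have "distinguishing V E c'" using A by simp
  moreover have "\<forall>v\<in>V. c' (\<tau> v) = c' v"
  proof
    fix v assume v: "v \<in> V"
    show "c' (\<tau> v) = c' v"
    proof (cases "v \<in> R")
      case False then show ?thesis using fixS v by simp
    next
      case True
      show ?thesis
      proof (cases "v \<in> A")
        case True then show ?thesis using AA AR by (auto simp: c'_def)
      next
        case False then show ?thesis using RA \<open>v\<in>R\<close> by (auto simp: c'_def)
      qed
    qed
  qed
  ultimately show ?thesis using aut unfolding distinguishing_def by blast
qed

lemma getsigma: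
  obtains \<sigma> where "automorphism V E \<sigma>" "\<forall>s\<in>V-R. \<sigma> s = s" "\<forall>v\<in>R. \<sigma> v \<in> R" "\<exists>v\<in>V. \<sigma> v \<noteq> v"
proof -
  obtain h where h: "bij_betw h (V-R) {0..<m-2}" by (rule getS)
  define c where "c v = (if v \<in> V-R then h v else m-2)" for v
  have hlt: "\<And>v. v \<in> V - R \<Longrightarrow> h v < m - 2" using h by (auto simp: bij_betw_def)
  have "c ` V \<subseteq> {0..<m-1}" using hlt m2 by (force simp: c_def)
  then have "\<not> distinguishing V E c" using B by blast
  then obtain \<sigma> where s: "automorphism V E \<sigma>" "\<forall>v\<in>V. c (\<sigma> v) = c v" "\<exists>v\<in>V. \<sigma> v \<noteq> v"
    unfolding distinguishing_def by blast
  have "\<forall>s\<in>V-R. \<sigma> s = s"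
  proof
    fix v assume v: "v \<in> V - R"
    have sv: "\<sigma> v \<in> V" using aut_in[OF s(1)] v by blast
    have eq: "c (\<sigma> v) = h v" using s(2) v by (simp add: c_def)
    show "\<sigma> v = v"
    proof (cases "\<sigma> v \<in> R")
      case True then show ?thesis using eq hlt[OF v] by (simp add: c_def)
    next
      case False
      then have "h (\<sigma> v) = h v" using eq sv by (simp add: c_def)
      then show ?thesis using h v sv False by (meson DiffI bij_betw_def inj_onD)
    qed
  qed
  moreover have "\<forall>v\<in>R. \<sigma> v \<in> R"
  proof
    fix v assume v: "v \<in> R"
    have sv: "\<sigma> v \<in> V" using aut_in[OF s(1)] v RV by blast
    have eq: "c (\<sigma> v) = m - 2" using s(2) v RV by (force simp: c_def)
    show "\<sigma> v \<in> R"
    proof (rule ccontr)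
      assume "\<sigma> v \<notin> R"
      then show False using eq hlt[of "\<sigma> v"] sv by (simp add: c_def)
    qed
  qed
  ultimately show ?thesis using that s by blast
qed

lemma card2:
  assumes "R = {x,y}" "x \<noteq> y"
  shows "\<forall>w\<in>V-{x,y}. E x w = E y w"
proof -
  obtain \<sigma> where s: "automorphism V E \<sigma>" "\<forall>s\<in>V-R. \<sigma> s = s" "\<forall>v\<in>R. \<sigma> v \<in> R" "\<exists>v\<in>V. \<sigma> v \<noteq> v"
    by (rule getsigma)
  have xy: "x \<in> V" "y \<in> V" using RV assms by auto
  have inj: "inj_on \<sigma> V" using aut_inj[OF s(1)] .
  have sx: "\<sigma> x = y"
  proof (rule ccontr)
    assume "\<sigma> x \<noteq> y"
    then have "\<sigma> x = x" using s(3) assms by auto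
    moreover have "\<sigma> y \<noteq> x" using \<open>\<sigma> x = x\<close> inj xy assms(2) by (metis inj_onD)
    then have "\<sigma> y = y" using s(3) assms by auto
    ultimately show False using s(2,4) assms by auto
  qed
  have sy: "\<sigma> y = x"
  proof -
    have "\<sigma> y \<noteq> y" using sx inj xy assms(2) by (metis inj_onD)
    then show ?thesis using s(3) assms by auto
  qed
  show ?thesis
  proof
    fix w assume w: "w \<in> V - {x,y}"
    then have "\<sigma> w = w" using s(2) assms by auto
    then show "E x w = E y w" using aut_E[OF s(1), of x w] xy w sx by auto
  qed
qed

lemma modsub: "a < p \<Longrightarrow> b < p \<Longrightarrow> (p - a) mod p = (p - b) mod (p::nat) \<Longrightarrow> a = b"
proof -
  assume a: "a < p" "b < p" "(p - a) mod p = (p - b) mod p"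
  consider "a = 0" "b = 0" | "a = 0" "b > 0" | "a > 0" "b = 0" | "a > 0" "b > 0" by blast
  then show "a = b"
  proof cases
    case 2 then show ?thesis using a by simp
  next
    case 3 then show ?thesis using a by simp
  next
    case 4 then show ?thesis using a by simp
  qed simp
qed

lemma card3: "card R \<ge> 3 \<Longrightarrow> False"
proof -
  assume r3: "card R \<ge> 3"
  obtain \<sigma> where s: "automorphism V E \<sigma>" "\<forall>s\<in>V-R. \<sigma> s = s" "\<forall>v\<in>R. \<sigma> v \<in> R" "\<exists>v\<in>V. \<sigma> v \<noteq> v"
    by (rule getsigma)
  have injR: "inj_on \<sigma> R" using aut_inj[OF s(1)] RV inj_on_subset by blast
  obtain v0 where v0: "v0 \<in> R" using r3 by fastforce
  define f where "f i = (\<sigma> ^^ i) v0" for i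
  have fS: "f (Suc i) = \<sigma> (f i)" for i by (simp add: f_def)
  have f0: "f 0 = v0" by (simp add: f_def)
  have fR: "f i \<in> R" for i by (induct i) (auto simp: fS f0 v0 s(3))
  have fV: "f i \<in> V" for i using fR RV by blast
  have O: "range f = R"
  proof (rule ccontr)
    assume ne: "range f \<noteq> R"
    have "\<forall>v\<in>V. \<sigma> v = v"
      by (rule Lp[OF s(1) s(2) s(3), of "range f"]) (use fR ne in \<open>auto simp: fS[symmetric]\<close>)
    then show False using s(4) by blast
  qed
  have "\<not> inj_on f {0..card R}"
  proof
    assume "inj_on f {0..card R}"
    then have "card {0..card R} \<le> card R" using card_inj_on_le[of f "{0..card R}" R] fR finR by blast
    then show False by simp
  qed
  then obtain i j where ij: "i \<le> card R" "j \<le> card R" "i < j" "f i = f j"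
    unfolding inj_on_def by (metis atLeastAtMost_iff linorder_neqE_nat zero_le)
  have canc: "f (a + k) = f (b + k) \<Longrightarrow> f a = f b" for a b k
  proof (induct k)
    case (Suc k)
    then show ?case using injR fR by (simp add: fS inj_on_def)
  qed simp
  define p where "p = j - i"
  have p1: "1 \<le> p" "p \<le> card R" using ij by (auto simp: p_def)
  have fp: "f p = f 0"
    using canc[of 0 i p] ij by (simp add: p_def add.commute)
  have per: "f (k + p) = f k" for k by (induct k) (auto simp: fS fp)
  have perq: "f (a + p * q) = f a" for a q
  proof (induct q)
    case (Suc q)
    have "f (a + p * Suc q) = f ((a + p*q) + p)" by (simp add: algebra_simps)
    then show ?case using per Suc by simp
  qed simp
  have fmod: "f k = f (k mod p)" for k
    using perq[of "k mod p" "k div p"] by simp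
  have Rp: "R = f ` {0..<p}"
  proof
    show "f ` {0..<p} \<subseteq> R" using fR by blast
    show "R \<subseteq> f ` {0..<p}"
    proof
      fix x assume "x \<in> R"
      then obtain k where "x = f k" using O by blast
      then have "x = f (k mod p)" using fmod by simp
      moreover have "k mod p \<in> {0..<p}" using p1 by simp
      ultimately show "x \<in> f ` {0..<p}" by blast
    qed
  qed
  have "card R \<le> p" using Rp card_image_le[of "{0..<p}" f] by simp
  then have pR: "p = card R" using p1 by simp
  have injf: "inj_on f {0..<p}" using Rp pR by (simp add: inj_on_iff_eq_card)
  have p3: "p \<ge> 3" using pR r3 by simp
  define g where "g = the_inv_into {0..<p} f"
  have gR: "x \<in> R \<Longrightarrow> g x < p" for x
    using the_inv_into_into[OF injf, of x "{0..<p}"] Rp by (simp add: g_def)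
  have fg: "x \<in> R \<Longrightarrow> f (g x) = x" for x
    using f_the_inv_into_f[OF injf] Rp by (simp add: g_def)
  have gf: "k < p \<Longrightarrow> g (f k) = k" for k
    using the_inv_into_f_f[OF injf] by (simp add: g_def)
  have shift: "E (f (a+t)) (f (b+t)) = E (f a) (f b)" for a b t
  proof (induct t)
    case (Suc t)
    then show ?case using aut_E[OF s(1) fV fV] by (simp add: fS)
  qed simp
  have sedge: "s \<in> V - R \<Longrightarrow> E (f k) s = E v0 s \<and> E s (f k) = E s v0" for k s
  proof (induct k)
    case 0 then show ?case by (simp add: f0)
  next
    case (Suc k)
    have "\<sigma> s = s" using Suc.prems s(2) by blast
    then show ?case using Suc aut_E[OF s(1), of "f k" s] aut_E[OF s(1), of s "f k"] fV by (simp add: fS)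
  qed
  define \<beta> where "\<beta> x = (if x \<in> R then f ((p - g x) mod p) else x)" for x
  have \<beta>R: "x \<in> R \<Longrightarrow> \<beta> x \<in> R" for x using fR by (simp add: \<beta>_def)
  have \<beta>f: "x \<in> R \<Longrightarrow> \<beta> x = f (p - g x)" for x using fmod by (simp add: \<beta>_def)
  have injb: "inj_on \<beta> V"
  proof (rule inj_onI)
    fix x y assume xy: "x \<in> V" "y \<in> V" "\<beta> x = \<beta> y"
    show "x = y"
    proof (cases "x \<in> R")
      case True
      show ?thesis
      proof (cases "y \<in> R")
        case True
        have "(p - g x) mod p = (p - g y) mod p"
          using xy(3) \<open>x\<in>R\<close> True injf p3 by (simp add: \<beta>_def inj_on_def)
        then have "g x = g y" using modsub gR \<open>x\<in>R\<close> True by blast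
        then show ?thesis using fg \<open>x\<in>R\<close> True by metis
      next
        case False
        then show ?thesis using xy \<beta>R[OF \<open>x\<in>R\<close>] by (simp add: \<beta>_def)
      qed
    next
      case False
      then show ?thesis using xy \<beta>R[of y] by (auto simp: \<beta>_def split: if_splits)
    qed
  qed
  have imb: "\<beta> ` V \<subseteq> V" using \<beta>R RV by (auto simp: \<beta>_def)
  have bijb: "bij_betw \<beta> V V"
    using endo_inj_surj[OF finV imb injb] injb by (simp add: bij_betw_def)
  have edges: "E (\<beta> u) (\<beta> w) = E u w" if u: "u \<in> V" and w: "w \<in> V" for u w
  proof (cases "u \<in> R")
    case True
    note uR = True
    show ?thesis
    proof (cases "w \<in> R")
      case True
      define i where "i = g u"
      define j where "j = g w"
      have ij': "i < p" "j < p" using gR uR True by (auto simp: i_def j_def)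
      have "E (\<beta> u) (\<beta> w) = E (f (p - i)) (f (p - j))" using \<beta>f uR True by (simp add: i_def j_def)
      also have "\<dots> = E (f (p - i + (i + j))) (f (p - j + (i + j)))" using shift by simp
      also have "p - i + (i + j) = j + p" using ij' by simp
      also have "p - j + (i + j) = i + p" using ij' by simp
      also have "E (f (j + p)) (f (i + p)) = E (f j) (f i)" using per by simp
      also have "\<dots> = E w u" using fg uR True by (simp add: i_def j_def)
      also have "\<dots> = E u w" using symE u w by simp
      finally show ?thesis .
    next
      case False
      then have "w \<in> V - R" using w by blast
      then show ?thesis using sedge[of w] uR False \<beta>f fg[OF uR] by (metis \<beta>_def)
    qed
  next
    case False
    note uR = False
    have "u \<in> V - R" using u False by blast
    show ?thesis
    proof (cases "w \<in> R")
      case True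
      then show ?thesis using sedge[OF \<open>u \<in> V - R\<close>] uR \<beta>f fg[OF True] by (metis \<beta>_def)
    next
      case False
      then show ?thesis using uR by (simp add: \<beta>_def)
    qed
  qed
  have autb: "automorphism V E \<beta>" using bijb edges by (simp add: automorphism_def)
  have gv0: "g v0 = 0" using gf[of 0] p3 f0 by simp
  have bv0: "\<beta> v0 = v0" using v0 gv0 f0 by (simp add: \<beta>_def)
  have "{v0} \<noteq> R" using r3 by auto
  then have allfix: "\<forall>v\<in>V. \<beta> v = v"
    by (intro Lp[OF autb]) (use v0 bv0 \<beta>R in \<open>auto simp: \<beta>_def\<close>)
  have "\<beta> (f 1) = f (p - 1)" using \<beta>f[OF fR[of 1]] gf[of 1] p3 by simp
  moreover have "f (p - 1) \<noteq> f 1"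
  proof
    assume "f (p - 1) = f 1"
    then have "p - 1 = 1" using injf p3 inj_onD[OF injf, of "p-1" 1] by simp
    then show False using p3 by simp
  qed
  ultimately show False using allfix fV[of 1] by simp
qed

end

definition sw :: "'a \<Rightarrow> 'a \<Rightarrow> 'a \<Rightarrow> 'a" where
  "sw a b = (\<lambda>x. if x = a then b else if x = b then a else x)"

lemma sw_bij: "a \<in> V \<Longrightarrow> b \<in> V \<Longrightarrow> bij_betw (sw a b) V V"
  by (rule bij_betw_byWitness[where f'="sw a b"]) (auto simp: sw_def)

lemma full_nd:
  assumes full: "\<forall>\<sigma>. bij_betw \<sigma> V V \<longrightarrow> automorphism V E \<sigma>"
    and ab: "a \<in> V" "b \<in> V" "a \<noteq> b" "c a = c b"
  shows "\<not> distinguishing V E c"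
proof
  assume d: "distinguishing V E c"
  have "automorphism V E (sw a b)" using full sw_bij[OF ab(1,2)] by simp
  moreover have "\<forall>v\<in>V. c (sw a b v) = c v" using ab by (simp add: sw_def)
  ultimately have "\<forall>v\<in>V. sw a b v = v" using d unfolding distinguishing_def by (elim allE[of _ "sw a b"]) simp
  then have "sw a b a = a" using ab by blast
  then show False using ab by (simp add: sw_def)
qed

lemma inj_dist:
  assumes i: "inj_on c V"
  shows "distinguishing V E c"
  unfolding distinguishing_def
proof (intro allI impI)
  fix \<sigma> assume a: "automorphism V E \<sigma> \<and> (\<forall>v\<in>V. c (\<sigma> v) = c v)"
  show "\<forall>v\<in>V. \<sigma> v = v"
  proof
    fix v assume v: "v \<in> V"
    have sv: "\<sigma> v \<in> V" using aut_in[OF conjunct1[OF a] v] .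
    have "c (\<sigma> v) = c v" using bspec[OF conjunct2[OF a] v] .
    then show "\<sigma> v = v" using inj_onD[OF i _ sv v] by simp
  qed
qed

theorem mainTheorem7:
  fixes V :: "'a set" and E :: "'a \<Rightarrow> 'a \<Rightarrow> bool"
  assumes "simple_graph V E" and "V \<noteq> {}"
  shows "distinguishing_threshold V E = distinguishing_number V E \<longleftrightarrow>
           asymmetric V E \<or> iso_complete V E \<or> iso_empty V E"
proof -
  note sg = assms(1)
  have finV: "finite V" using sg by (simp add: simple_graph_def)
  define n where "n = card V"
  have n1: "n \<ge> 1" using finV assms(2) by (simp add: n_def Suc_le_eq card_gt_0_iff)
  obtain h where h: "bij_betw h V {0..<n}" using ex_bij_betw_finite_nat[OF finV] n_def by auto
  have Pn: "\<forall>c::'a\<Rightarrow>nat. card (c`V) = n \<longrightarrow> distinguishing V E c"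
  proof (intro allI impI)
    fix c :: "'a \<Rightarrow> nat" assume "card (c`V) = n"
    then have "inj_on c V" using finV using inj_on_iff_eq_card[OF finV, of c] n_def by argo
    then show "distinguishing V E c" by (rule inj_dist)
  qed
  define PT where "PT k = (k \<ge> 1 \<and> (\<forall>c :: 'a \<Rightarrow> nat. card (c ` V) = k \<longrightarrow> distinguishing V E c))" for k
  define PD where "PD k = (\<exists>c::'a\<Rightarrow>nat. c ` V \<subseteq> {0..<k} \<and> distinguishing V E c)" for k
  have T: "distinguishing_threshold V E = (LEAST k. PT k)" by (simp add: distinguishing_threshold_def PT_def)
  have D: "distinguishing_number V E = (LEAST k. PD k)" by (simp add: distinguishing_number_def PD_def)
  have PTn: "PT n" using Pn n1 by (simp add: PT_def)
  have PDn: "PD n" unfolding PD_def using h inj_dist[of h V E] by (auto simp: bij_betw_def)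
  have PD0: "\<not> PD 0" using assms(2) by (auto simp: PD_def)
  show ?thesis
  proof
    assume eq: "distinguishing_threshold V E = distinguishing_number V E"
    show "asymmetric V E \<or> iso_complete V E \<or> iso_empty V E"
    proof (rule ccontr)
      assume nc: "\<not> (asymmetric V E \<or> iso_complete V E \<or> iso_empty V E)"
      define m where "m = (LEAST k. PT k)"
      have PTm: "PT m" using LeastI[of PT n] PTn by (simp add: m_def)
      have mn: "m \<le> n" using Least_le[of PT n] PTn by (simp add: m_def)
      have Dm: "(LEAST k. PD k) = m" using eq T D m_def by simp
      have PDm: "PD m" using LeastI[of PD n] PDn Dm by simp
      have m2: "m \<ge> 2"
      proof (rule ccontr)
        assume "\<not> m \<ge> 2"
        then have "m \<le> 1" by simp
        from PDm obtain c where c: "c ` V \<subseteq> {0..<m}" "distinguishing V E c" by (auto simp: PD_def)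
        have "\<forall>v\<in>V. c v = 0" using c(1) \<open>m \<le> 1\<close> by auto
        have "asymmetric V E" unfolding asymmetric_def
        proof (intro allI impI)
          fix \<sigma> assume a: "automorphism V E \<sigma>"
          have "\<forall>v\<in>V. c (\<sigma> v) = c v" using \<open>\<forall>v\<in>V. c v = 0\<close> aut_in[OF a] by simp
          then show "\<forall>v\<in>V. \<sigma> v = v" using c(2) a unfolding distinguishing_def by blast
        qed
        then show False using nc by blast
      qed
      have Am: "\<And>c::'a\<Rightarrow>nat. card (c`V) = m \<Longrightarrow> distinguishing V E c" using PTm by (simp add: PT_def)
      have Bm: "\<And>c::'a\<Rightarrow>nat. c`V \<subseteq> {0..<m-1} \<Longrightarrow> \<not> distinguishing V E c"
      proof -
        fix c :: "'a \<Rightarrow> nat" assume "c`V \<subseteq> {0..<m-1}"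
        moreover have "\<not> PD (m-1)" using not_less_Least[of "m-1" PD] Dm m2 by simp
        ultimately show "\<not> distinguishing V E c" by (auto simp: PD_def)
      qed
      show False
      proof (cases "m < n")
        case True
        have "n - m + 2 \<le> card V" using True m2 by (simp add: n_def)
        then obtain R where R: "R \<subseteq> V" "card R = n - m + 2" using obtain_subset_with_card_n[of "n - m + 2" V]
          by blast
        interpret thr V E m R
          by unfold_locales (use sg Am Bm m2 R True n_def in auto)
        show False by (rule card3) (use R True in simp)
      next
        case False
        then have mn': "m = n" using mn by simp
        have tw: "\<forall>w\<in>V-{x,y}. E x w = E y w" if xy: "x \<in> V" "y \<in> V" "x \<noteq> y" for x y
        proof -
          interpret thr V E m "{x,y}"
            by unfold_locales (use sg Am Bm m2 xy mn' n_def in auto)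
          show ?thesis using card2 xy by blast
        qed
        have symE: "u \<in> V \<Longrightarrow> v \<in> V \<Longrightarrow> E u v = E v u" for u v using sg by (auto simp: simple_graph_def)
        have same: "E x y = E u w" if "x \<in> V" "y \<in> V" "u \<in> V" "w \<in> V" "x \<noteq> y" "u \<noteq> w" for x y u w
        proof (cases "y = u")
          case True
          have "E x y = E u x" using symE that True by simp
          also have "\<dots> = E u w"
          proof (cases "x = w")
            case False
            then show ?thesis using tw[of x w] that True symE by auto
          qed simp
          finally show ?thesis .
        next
          case False
          have "E x y = E u y"
          proof (cases "x = u")
            case False
            then show ?thesis using tw[of x u] that \<open>y \<noteq> u\<close> by auto
          qed simp
          also have "\<dots> = E y u" using symE that by simp
          also have "\<dots> = E w u"
          proof (cases "y = w")
            case False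
            then show ?thesis using tw[of y w] that \<open>y \<noteq> u\<close> by auto
          qed simp
          also have "\<dots> = E u w" using symE that by simp
          finally show ?thesis .
        qed
        have "iso_complete V E \<or> iso_empty V E"
        proof (cases "\<exists>x\<in>V. \<exists>y\<in>V. x \<noteq> y \<and> E x y")
          case True
          then obtain x y where xy: "x\<in>V" "y\<in>V" "x\<noteq>y" "E x y" by blast
          have "iso_complete V E" unfolding iso_complete_def
          proof (intro ballI impI)
            fix u w assume "u \<in> V" "w \<in> V" "u \<noteq> w"
            then show "E u w" using same[OF xy(1,2) \<open>u\<in>V\<close> \<open>w\<in>V\<close> xy(3) \<open>u\<noteq>w\<close>] xy(4) by simp
          qed
          then show ?thesis by simp
        next
          case False
          have irr: "\<And>x. x \<in> V \<Longrightarrow> \<not> E x x" using sg by (simp add: simple_graph_def)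
          have "iso_empty V E" unfolding iso_empty_def
          proof (intro ballI)
            fix u w assume "u \<in> V" "w \<in> V"
            then show "\<not> E u w" using False irr by (cases "u = w") auto
          qed
          then show ?thesis by simp
        qed
        then show False using nc by blast
      qed
    qed
  next
    assume h3: "asymmetric V E \<or> iso_complete V E \<or> iso_empty V E"
    show "distinguishing_threshold V E = distinguishing_number V E"
    proof (cases "asymmetric V E")
      case True
      then have alld: "\<And>c. distinguishing V E c" by (auto simp: asymmetric_def distinguishing_def)
      have "(LEAST k. PT k) = 1" by (rule Least_equality) (auto simp: PT_def alld)
      moreover have "(LEAST k. PD k) = 1"
      proof (rule Least_equality)
        show "PD 1" unfolding PD_def using alld[of "\<lambda>_. 0"] by auto
        show "\<And>y. PD y \<Longrightarrow> 1 \<le> y" using PD0 by (metis less_one not_le)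
      qed
      ultimately show ?thesis using T D by simp
    next
      case False
      then have ce: "iso_complete V E \<or> iso_empty V E" using h3 by blast
      have full: "\<forall>\<sigma>. bij_betw \<sigma> V V \<longrightarrow> automorphism V E \<sigma>"
      proof (intro allI impI)
        fix \<sigma> assume b: "bij_betw \<sigma> V V"
        have "\<forall>u\<in>V. \<forall>v\<in>V. E (\<sigma> u) (\<sigma> v) = E u v"
        proof (intro ballI)
          fix u v assume uv: "u \<in> V" "v \<in> V"
          have su: "\<sigma> u \<in> V" "\<sigma> v \<in> V" using b uv bij_betwE by blast+
          have "(\<sigma> u = \<sigma> v) = (u = v)" using b uv by (meson bij_betw_def inj_onD)
          have irr: "\<And>x. x \<in> V \<Longrightarrow> \<not> E x x" using sg by (simp add: simple_graph_def)
          show "E (\<sigma> u) (\<sigma> v) = E u v"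
          proof (cases "u = v")
            case True then show ?thesis using irr su uv by simp
          next
            case False
            then have "\<sigma> u \<noteq> \<sigma> v" using \<open>(\<sigma> u = \<sigma> v) = (u = v)\<close> by simp
            then show ?thesis using ce False su uv unfolding iso_complete_def iso_empty_def by blast
          qed
        qed
        then show "automorphism V E \<sigma>" using b by (simp add: automorphism_def)
      qed
      have hlt: "\<And>v. v \<in> V \<Longrightarrow> h v < n" using h by (auto simp: bij_betw_def)
      have "(LEAST k. PT k) = n"
      proof (rule Least_equality)
        show "PT n" by (rule PTn)
        fix y assume py: "PT y"
        show "n \<le> y"
        proof (rule ccontr)
          assume "\<not> n \<le> y"
          then have yn: "y < n" by simp
          have y1: "y \<ge> 1" using py by (simp add: PT_def)
          define c where "c v = min (h v) (y - 1)" for v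
          have "c ` V = {0..<y}"
          proof
            show "c ` V \<subseteq> {0..<y}" using y1 by (auto simp: c_def)
            show "{0..<y} \<subseteq> c ` V"
            proof
              fix k assume k: "k \<in> {0..<y}"
              then have "k \<in> h ` V" using h yn by (auto simp: bij_betw_def)
              then obtain v where "v \<in> V" "h v = k" by blast
              then show "k \<in> c ` V" using k by (force simp: c_def)
            qed
          qed
          then have dc: "distinguishing V E c" using py by (simp add: PT_def)
          have hV: "h ` V = {0..<n}" using h by (simp add: bij_betw_def)
          have "y - 1 \<in> {0..<n}" "n - 1 \<in> {0..<n}" using yn y1 by auto
          then have i1: "y - 1 \<in> h ` V" and i2: "n - 1 \<in> h ` V" using hV by simp_all
          obtain a where a: "a \<in> V" "h a = y - 1" using i1 by (auto simp only: image_iff)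
          obtain b where b: "b \<in> V" "h b = n - 1" using i2 by (auto simp only: image_iff)
          note ab = a(1) b(1) a(2) b(2)
          have ne: "a \<noteq> b" using ab yn y1 by auto
          have "c a = c b" using ab yn by (simp add: c_def)
          then show False using full_nd[OF full ab(1,2) ne] dc by blast
        qed
      qed
      moreover have "(LEAST k. PD k) = n"
      proof (rule Least_equality)
        show "PD n" by (rule PDn)
        fix y assume py: "PD y"
        then obtain c where c: "c ` V \<subseteq> {0..<y}" "distinguishing V E c" by (auto simp: PD_def)
        show "n \<le> y"
        proof (rule ccontr)
          assume "\<not> n \<le> y"
          have "card (c ` V) \<le> y" using card_mono[OF _ c(1)] by simp
          then have "card (c ` V) \<noteq> card V" using \<open>\<not> n \<le> y\<close> n_def by linarith
          then have "\<not> inj_on c V" using inj_on_iff_eq_card[OF finV, of c] by simp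
          then obtain a b where "a \<in> V" "b \<in> V" "a \<noteq> b" "c a = c b" unfolding inj_on_def by blast
          then show False using full_nd[OF full] c(2) by blast
        qed
      qed
      ultimately show ?thesis using T D by simp
    qed
  qed
qed

end
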